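(* Consider a combinatorial auction as described in the context, let $x^*$ be an efficient allocation, and let $\bar\rho=(\bar\rho_i)_{i\in\mathcal I}$ be any payment vector that is core-selecting at $x^*$. Then there exists an Artificial Walrasian Equilibrium (obtained by adding valid cuts as artificial items) supporting $x^*$ in which every winning bidder $i$ pays in total exactly $\bar\rho_i$, i.e. $p\,a^{i*}=\bar\rho_i$ where $p$ is the price vector on original and artificial items and $a^{i*}$ is bidder $i$'s allocated bundle in the augmented auction.
   Context: Combinatorial auction (CA): item types $j\in\mathcal J=\{1,\dots,J\}$ with supply $c_j\in\mathbb Z_{\ge1}$ (supply vector $c$); bidders $\mathcal I=\{1,\dots,I\}$; a finite set of bids $\mathcal K=\{1,\dots,K\}$, each bid $k$ made by a bidder $i(k)$ and consisting of a bundle $a^k\in\mathbb Z^J_{\ge0}$ with $a^k\le c$ and an amount $b_k\ge0$; $\mathcal K_i$ is the set of bids of bidder $i$. Bids are taken to be truthful. $\bm A$ is the $J\times K$ matrix with columns $a^k$, and $\bm B$ is the $I\times K$ matrix with $\bm B_{i,k}=1$ iff $k\in\mathcal K_i$, else $0$. A feasible allocation is $x\in\{0,1\}^K$ with $\bm Ax\le c$ and $\bm Bx\le\bm 1$ (at most one bid accepted per bidder). For a set of bidders $\mathcal C$, a supply vector $c'$ and bid amounts, $w(\mathcal C,c',\cdot)$ is the maximum of $\sum_k b_kx_k$ over feasible allocations (with supply $c'$) using only bids of bidders in $\mathcal C$. An efficient allocation $x^*$ is an optimal feasible allocation for all bidders and supply $c$; $a^{i*}$ and $b_{i*}$ denote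 the bundle and amount of bidder $i$'s accepted bid ($\bm 0$ and $0$ if none). A payment vector $\rho$ (with $\rho_i=0$ for bidders with no accepted bid) is core-selecting at $x^*$ if $\rho_i\le b_{i*}$ for all $i$ and for every $\mathcal C\subseteq\mathcal I$: $\sum_{i\in\mathcal C}(b_{i*}-\rho_i)+\sum_{i\in\mathcal I}\rho_i\ge w(\mathcal C,c,\mathcal K^{\mathcal C})$, where $\mathcal K^{\mathcal C}$ is the set of bids of bidders in $\mathcal C$. A Walrasian equilibrium (WE) is a pair $(x^*,p)$, $x^*$ efficient, $p\in\mathbb R^J_{\ge0}$, such that the surpluses $s_i=b_{i*}-p\,a^{i*}$ satisfy $s_i\ge0$ for all $i$, $p\,a^k+s_{i(k)}\ge b_k$ for all bids $k$ (envy-freeness), and $p_j=0$ whenever $(\bm Ax^* )_j<c_j$; payments are $\rho_i=p\,a^{i*}$. A valid cut is a pair $(\alpha,\alpha_0)$ with $\alpha\in\mathbb R^K_{\ge0}$ such that $\alpha x\le\alpha_0$ for every feasible allocation $x$ and $\alpha x^*=\alpha_0$ (fully demanded at $x^*$). Adding it as an artificial item means appending $\alpha$ as a new row of $\bm A$ (bid $k$ contains $\alpha_k$ units of the new item) with supply $\alpha_0$; this leaves the set of feasible allocations unchanged. An Artificial Walrasian Equilibrium (AWE) is a WE of the CA augmented by finitely many valid cuts as artificial items. *)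

theory Defs
  imports Complex_Main
begin

text \<open>
Generic (possibly augmented) auction data.  A j k is the (real) number of units of item j in
bid k, cap j is the supply of item j.  Bids are 0..K-1, bidders 0..I-1,
bidder k is the bidder i(k) who made bid k, and b k is the amount of bid k.
An allocation x in {0,1}^K is represented by the set S of accepted bids.
\<close>

definition feasible ::
  "'j set \<Rightarrow> ('j \<Rightarrow> nat \<Rightarrow> real) \<Rightarrow> ('j \<Rightarrow> real) \<Rightarrow> (nat \<Rightarrow> nat) \<Rightarrow> nat \<Rightarrow> nat set \<Rightarrow> bool"
  where "feasible Js A cap bidder K S \<longleftrightarrow>
     S \<subseteq> {..<K} \<and> inj_on bidder S \<and> (\<forall>j\<in>Js. (\<Sum>k\<in>S. A j k) \<le> cap j)"

definition efficient ::
  "'j set \<Rightarrow> ('j \<Rightarrow> nat \<Rightarrow> real) \<Rightarrow> ('j \<Rightarrow> real) \<Rightarrow> (nat \<Rightarrow> nat) \<Rightarrow> (nat \<Rightarrow> real) \<Rightarrow> nat \<Rightarrow> nat set \<Rightarrow> bool"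
  where "efficient Js A cap bidder b K S \<longleftrightarrow>
     feasible Js A cap bidder K S \<and>
     (\<forall>T. feasible Js A cap bidder K T \<longrightarrow> (\<Sum>k\<in>T. b k) \<le> (\<Sum>k\<in>S. b k))"

text \<open>Amount b_{i*} of bidder i's accepted bid in S (0 if none).\<close>
definition bstar :: "(nat \<Rightarrow> nat) \<Rightarrow> (nat \<Rightarrow> real) \<Rightarrow> nat set \<Rightarrow> nat \<Rightarrow> real"
  where "bstar bidder b S i = (\<Sum>k\<in>{k\<in>S. bidder k = i}. b k)"

text \<open>Total price p a^{i*} of bidder i's accepted bundle in S (0 if none).\<close>
definition paid :: "'j set \<Rightarrow> ('j \<Rightarrow> nat \<Rightarrow> real) \<Rightarrow> ('j \<Rightarrow> real) \<Rightarrow> (nat \<Rightarrow> nat) \<Rightarrow> nat set \<Rightarrow> nat \<Rightarrow> real"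
  where "paid Js A p bidder S i = (\<Sum>k\<in>{k\<in>S. bidder k = i}. \<Sum>j\<in>Js. p j * A j k)"

definition walrasian_eq ::
  "'j set \<Rightarrow> ('j \<Rightarrow> nat \<Rightarrow> real) \<Rightarrow> ('j \<Rightarrow> real) \<Rightarrow> nat \<Rightarrow> (nat \<Rightarrow> nat) \<Rightarrow> (nat \<Rightarrow> real) \<Rightarrow> nat
    \<Rightarrow> nat set \<Rightarrow> ('j \<Rightarrow> real) \<Rightarrow> bool"
  where "walrasian_eq Js A cap I bidder b K S p \<longleftrightarrow>
     efficient Js A cap bidder b K S \<and>
     (\<forall>j\<in>Js. p j \<ge> 0) \<and>
     (let s = (\<lambda>i. bstar bidder b S i - paid Js A p bidder S i) in
        (\<forall>i<I. s i \<ge> 0) \<and>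
        (\<forall>k<K. (\<Sum>j\<in>Js. p j * A j k) + s (bidder k) \<ge> b k)) \<and>
     (\<forall>j\<in>Js. (\<Sum>k\<in>S. A j k) < cap j \<longrightarrow> p j = 0)"

text \<open>Original CA: items 0..J-1, bundles a k j \<in> \<nat>, supply c j.\<close>
definition origA :: "(nat \<Rightarrow> nat \<Rightarrow> nat) \<Rightarrow> nat \<Rightarrow> nat \<Rightarrow> real"
  where "origA a j k = real (a k j)"

definition origC :: "(nat \<Rightarrow> nat) \<Rightarrow> nat \<Rightarrow> real"
  where "origC c j = real (c j)"

definition coal_value ::
  "nat \<Rightarrow> (nat \<Rightarrow> nat) \<Rightarrow> (nat \<Rightarrow> nat \<Rightarrow> nat) \<Rightarrow> (nat \<Rightarrow> nat) \<Rightarrow> (nat \<Rightarrow> real) \<Rightarrow> nat \<Rightarrow> nat set \<Rightarrow> real"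
  where "coal_value J c a bidder b K C =
     Max {(\<Sum>k\<in>T. b k) | T. feasible {..<J} (origA a) (origC c) bidder K T \<and> bidder ` T \<subseteq> C}"

definition core_selecting ::
  "nat \<Rightarrow> (nat \<Rightarrow> nat) \<Rightarrow> (nat \<Rightarrow> nat \<Rightarrow> nat) \<Rightarrow> nat \<Rightarrow> (nat \<Rightarrow> nat) \<Rightarrow> (nat \<Rightarrow> real) \<Rightarrow> nat
    \<Rightarrow> nat set \<Rightarrow> (nat \<Rightarrow> real) \<Rightarrow> bool"
  where "core_selecting J c a I bidder b K S \<rho> \<longleftrightarrow>
     (\<forall>i<I. i \<notin> bidder ` S \<longrightarrow> \<rho> i = 0) \<and>
     (\<forall>i<I. \<rho> i \<le> bstar bidder b S i) \<and>
     (\<forall>C\<subseteq>{..<I}. (\<Sum>i\<in>C. bstar bidder b S i - \<rho> i) + (\<Sum>i<I. \<rho> i)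
                      \<ge> coal_value J c a bidder b K C)"

definition valid_cut ::
  "nat \<Rightarrow> (nat \<Rightarrow> nat) \<Rightarrow> (nat \<Rightarrow> nat \<Rightarrow> nat) \<Rightarrow> (nat \<Rightarrow> nat) \<Rightarrow> nat \<Rightarrow> nat set
    \<Rightarrow> (nat \<Rightarrow> real) \<Rightarrow> real \<Rightarrow> bool"
  where "valid_cut J c a bidder K S \<alpha> \<alpha>0 \<longleftrightarrow>
     (\<forall>k<K. \<alpha> k \<ge> 0) \<and>
     (\<forall>T. feasible {..<J} (origA a) (origC c) bidder K T \<longrightarrow> (\<Sum>k\<in>T. \<alpha> k) \<le> \<alpha>0) \<and>
     (\<Sum>k\<in>S. \<alpha> k) = \<alpha>0"

text \<open>Augmented CA: items Inl j (original, j < J) and Inr t (t-th cut).\<close>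
definition augItems :: "nat \<Rightarrow> ((nat \<Rightarrow> real) \<times> real) list \<Rightarrow> (nat + nat) set"
  where "augItems J cuts = Inl ` {..<J} \<union> Inr ` {..<length cuts}"

definition augA :: "(nat \<Rightarrow> nat \<Rightarrow> nat) \<Rightarrow> ((nat \<Rightarrow> real) \<times> real) list \<Rightarrow> nat + nat \<Rightarrow> nat \<Rightarrow> real"
  where "augA a cuts it k = (case it of Inl j \<Rightarrow> real (a k j) | Inr t \<Rightarrow> fst (cuts ! t) k)"

definition augC :: "(nat \<Rightarrow> nat) \<Rightarrow> ((nat \<Rightarrow> real) \<times> real) list \<Rightarrow> nat + nat \<Rightarrow> real"
  where "augC c cuts it = (case it of Inl j \<Rightarrow> real (c j) | Inr t \<Rightarrow> snd (cuts ! t))"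

end

theory Submission
  imports Defs
begin

lemma feasible_subset:
  assumes "feasible {..<J} (origA a) (origC c) bidder K T" "T' \<subseteq> T"
  shows "feasible {..<J} (origA a) (origC c) bidder K T'"
proof -
  have fin: "finite T" using assms(1) unfolding feasible_def by (meson finite_lessThan finite_subset)
  have "(\<Sum>k\<in>T'. origA a j k) \<le> (\<Sum>k\<in>T. origA a j k)" for j
    by (rule sum_mono2[OF fin assms(2)]) (simp add: origA_def)
  then show ?thesis using assms unfolding feasible_def
    by (meson inj_on_subset order_trans subset_trans)
qed

lemma coal_ge:
  assumes "feasible {..<J} (origA a) (origC c) bidder K T" "bidder ` T \<subseteq> C"
  shows "sum b T \<le> coal_value J c a bidder b K C"
proof -
  have "{(\<Sum>k\<in>T. b k) | T. feasible {..<J} (origA a) (origC c) bidder K T \<and> bidder ` T \<subseteq> C}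
        \<subseteq> (\<lambda>T. sum b T) ` Pow {..<K}"
    unfolding feasible_def by auto
  then have fin: "finite {(\<Sum>k\<in>T. b k) | T. feasible {..<J} (origA a) (origC c) bidder K T \<and> bidder ` T \<subseteq> C}"
    by (rule finite_subset) simp
  show ?thesis unfolding coal_value_def
    by (rule Max_ge[OF fin]) (use assms in blast)
qed

theorem theorem1:
  fixes J I K :: nat
    and c :: "nat \<Rightarrow> nat"
    and a :: "nat \<Rightarrow> nat \<Rightarrow> nat"
    and bidder :: "nat \<Rightarrow> nat"
    and b :: "nat \<Rightarrow> real"
    and S :: "nat set"
    and \<rho> :: "nat \<Rightarrow> real"
  assumes supply_pos: "\<forall>j<J. c j \<ge> 1"
    and bundle_le: "\<forall>k<K. \<forall>j<J. a k j \<le> c j"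
    and amount_nonneg: "\<forall>k<K. b k \<ge> 0"
    and bidder_range: "\<forall>k<K. bidder k < I"
    and eff: "efficient {..<J} (origA a) (origC c) bidder b K S"
    and core: "core_selecting J c a I bidder b K S \<rho>"
  shows "\<exists>cuts :: ((nat \<Rightarrow> real) \<times> real) list.
           (\<forall>(\<alpha>, \<alpha>0) \<in> set cuts. valid_cut J c a bidder K S \<alpha> \<alpha>0) \<and>
           (\<exists>p :: nat + nat \<Rightarrow> real.
              walrasian_eq (augItems J cuts) (augA a cuts) (augC c cuts) I bidder b K S p \<and>
              (\<forall>i \<in> bidder ` S. paid (augItems J cuts) (augA a cuts) p bidder S i = \<rho> i))"
proof -
  let ?F = "feasible {..<J} (origA a) (origC c) bidder K"
  have FS: "?F S" and opt: "\<And>T. ?F T \<Longrightarrow> sum b T \<le> sum b S"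
    using eff unfolding efficient_def by auto
  have Ssub: "S \<subseteq> {..<K}" and inj: "inj_on bidder S" using FS unfolding feasible_def by auto
  have finS: "finite S" using Ssub finite_subset by blast
  have Sb: "\<And>k. k \<in> S \<Longrightarrow> bidder k < I" using Ssub bidder_range by auto
  have core1: "\<And>i. i < I \<Longrightarrow> i \<notin> bidder ` S \<Longrightarrow> \<rho> i = 0"
    and core2: "\<And>i. i < I \<Longrightarrow> \<rho> i \<le> bstar bidder b S i"
    and core3: "\<And>C. C \<subseteq> {..<I} \<Longrightarrow> (\<Sum>i\<in>C. bstar bidder b S i - \<rho> i) + (\<Sum>i<I. \<rho> i)
                      \<ge> coal_value J c a bidder b K C"
    using core unfolding core_selecting_def by auto
  define bs where "bs = bstar bidder b S"
  have single: "\<And>k. k \<in> S \<Longrightarrow> {k'\<in>S. bidder k' = bidder k} = {k}"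
    using inj by (auto simp: inj_on_def)
  have bs_win: "\<And>k. k \<in> S \<Longrightarrow> bs (bidder k) = b k"
    unfolding bs_def bstar_def using single by simp
  have bs_lose: "\<And>i. i \<notin> bidder ` S \<Longrightarrow> bs i = 0"
    unfolding bs_def bstar_def
    by (metis (mono_tags, lifting) image_eqI mem_Collect_eq sum.neutral)
  have bsum: "sum bs C = sum b {k\<in>S. bidder k \<in> C}" if "finite C" for C
  proof -
    have "sum bs C = sum bs (C \<inter> bidder ` S)"
      by (rule sum.mono_neutral_right) (use that bs_lose in auto)
    also have "C \<inter> bidder ` S = bidder ` {k\<in>S. bidder k \<in> C}" by auto
    also have "sum bs (bidder ` {k\<in>S. bidder k \<in> C}) = sum (bs \<circ> bidder) {k\<in>S. bidder k \<in> C}"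
      by (rule sum.reindex) (rule inj_on_subset[OF inj], auto)
    also have "\<dots> = sum b {k\<in>S. bidder k \<in> C}"
      by (rule sum.cong) (auto simp: bs_win)
    finally show ?thesis .
  qed
  have core': "sum b T \<le> (\<Sum>i\<in>C. bs i - \<rho> i) + (\<Sum>i<I. \<rho> i)"
    if "C \<subseteq> {..<I}" "?F T" "bidder ` T \<subseteq> C" for C T
    using coal_ge[OF that(2,3), of b] core3[OF that(1)] unfolding bs_def by linarith
  have rho_nn: "0 \<le> \<rho> i" if "i < I" for i
  proof -
    define C where "C = {..<I} - {i}"
    define T where "T = {k\<in>S. bidder k \<noteq> i}"
    have FT: "?F T" by (rule feasible_subset[OF FS]) (auto simp: T_def)
    have TC: "bidder ` T \<subseteq> C" using Sb by (auto simp: T_def C_def)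
    have "T = {k\<in>S. bidder k \<in> C}" using Sb by (auto simp: T_def C_def)
    then have e1: "sum b T = sum bs C" using bsum[of C] by (simp add: C_def)
    have e2: "(\<Sum>i<I. \<rho> i) = sum \<rho> C + \<rho> i"
      unfolding C_def using that
      by (metis add.commute finite_lessThan lessThan_iff sum.remove)
    have "(\<Sum>i\<in>C. bs i - \<rho> i) = sum bs C - sum \<rho> C" by (simp add: sum_subtractf)
    with core'[OF _ FT TC] e1 e2 show ?thesis by (simp add: C_def)
  qed
  define \<alpha> where "\<alpha> k = max 0 (b k - bs (bidder k) + \<rho> (bidder k))" for k
  have \<alpha>_win: "\<And>k. k \<in> S \<Longrightarrow> \<alpha> k = \<rho> (bidder k)"
    unfolding \<alpha>_def using bs_win rho_nn Sb by simp
  define \<alpha>0 where "\<alpha>0 = sum \<alpha> S"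
  have \<alpha>0_eq: "\<alpha>0 = (\<Sum>i<I. \<rho> i)"
  proof -
    have "\<alpha>0 = sum (\<rho> \<circ> bidder) S" unfolding \<alpha>0_def by (rule sum.cong) (auto simp: \<alpha>_win)
    also have "\<dots> = sum \<rho> (bidder ` S)" by (rule sum.reindex[symmetric, OF inj])
    also have "\<dots> = (\<Sum>i<I. \<rho> i)"
      by (rule sum.mono_neutral_left) (use Sb core1 in auto)
    finally show ?thesis .
  qed
  have valid: "valid_cut J c a bidder K S \<alpha> \<alpha>0"
    unfolding valid_cut_def
  proof (intro conjI allI impI)
    show "\<And>k. k < K \<Longrightarrow> 0 \<le> \<alpha> k" by (simp add: \<alpha>_def)
    show "sum \<alpha> S = \<alpha>0" by (simp add: \<alpha>0_def)
    fix T assume FT: "?F T"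
    have finT: "finite T" using FT unfolding feasible_def by (meson finite_lessThan finite_subset)
    have injT: "inj_on bidder T" using FT unfolding feasible_def by auto
    have TK: "T \<subseteq> {..<K}" using FT unfolding feasible_def by auto
    define g where "g k = b k - bs (bidder k) + \<rho> (bidder k)" for k
    define T' where "T' = {k\<in>T. 0 < g k}"
    have FT': "?F T'" by (rule feasible_subset[OF FT]) (auto simp: T'_def)
    have "sum \<alpha> T = sum \<alpha> T'"
      by (rule sum.mono_neutral_right) (use finT in \<open>auto simp: T'_def \<alpha>_def g_def\<close>)
    also have "\<dots> = sum g T'" by (rule sum.cong) (auto simp: T'_def \<alpha>_def g_def)
    also have "\<dots> = sum b T' - sum (\<lambda>i. bs i - \<rho> i) (bidder ` T')"
    proof -
      have "sum (\<lambda>i. bs i - \<rho> i) (bidder ` T') = sum ((\<lambda>i. bs i - \<rho> i) \<circ> bidder) T'"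
        by (rule sum.reindex) (rule inj_on_subset[OF injT], auto simp: T'_def)
      then show ?thesis by (simp add: g_def sum_subtractf sum.distrib)
    qed
    also have "\<dots> \<le> (\<Sum>i<I. \<rho> i)"
    proof -
      have "bidder ` T' \<subseteq> {..<I}" using TK bidder_range by (auto simp: T'_def)
      from core'[OF this FT' order_refl] show ?thesis by linarith
    qed
    finally show "sum \<alpha> T \<le> \<alpha>0" using \<alpha>0_eq by simp
  qed
  define cuts where "cuts = [(\<alpha>, \<alpha>0)]"
  define Js where "Js = augItems J cuts"
  define p :: "nat + nat \<Rightarrow> real" where "p it = (if it = Inr 0 then 1 else 0)" for it
  have JsE: "Js = Inl ` {..<J} \<union> {Inr 0}" by (auto simp: Js_def augItems_def cuts_def)
  have pA: "(\<Sum>j\<in>Js. p j * augA a cuts j k) = \<alpha> k" for k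
  proof -
    have "(\<Sum>j\<in>Js. p j * augA a cuts j k) = (\<Sum>j\<in>Js. if j = Inr 0 then augA a cuts j k else 0)"
      by (rule sum.cong) (auto simp: p_def)
    also have "\<dots> = augA a cuts (Inr 0) k" by (simp add: JsE)
    finally show ?thesis by (simp add: augA_def cuts_def)
  qed
  have augF: "feasible Js (augA a cuts) (augC c cuts) bidder K T \<longleftrightarrow> ?F T \<and> sum \<alpha> T \<le> \<alpha>0" for T
    by (auto simp: feasible_def JsE augA_def augC_def cuts_def origA_def origC_def)
  have paid_eq: "paid Js (augA a cuts) p bidder S i = \<rho> i" if "i < I" for i
  proof (cases "i \<in> bidder ` S")
    case True
    then obtain k0 where k0: "k0 \<in> S" "i = bidder k0" by auto
    show ?thesis unfolding paid_def pA using single[OF k0(1)] \<alpha>_win[OF k0(1)] k0 by simp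
  next
    case False
    then have "{k\<in>S. bidder k = i} = {}" by auto
    then show ?thesis unfolding paid_def using core1[OF that False] by (simp only: sum.empty)
  qed
  have effA: "efficient Js (augA a cuts) (augC c cuts) bidder b K S"
    unfolding efficient_def augF using FS opt \<alpha>0_def by auto
  have we: "walrasian_eq Js (augA a cuts) (augC c cuts) I bidder b K S p"
    unfolding walrasian_eq_def Let_def
  proof (intro conjI ballI allI impI effA)
    show "\<And>j. j \<in> Js \<Longrightarrow> 0 \<le> p j" by (simp add: p_def)
    show "0 \<le> bstar bidder b S i - paid Js (augA a cuts) p bidder S i" if "i < I" for i
      using paid_eq[OF that] core2[OF that] by simp
    show "b k \<le> (\<Sum>j\<in>Js. p j * augA a cuts j k) + (bstar bidder b S (bidder k) - paid Js (augA a cuts) p bidder S (bidder k))"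
      if "k < K" for k
      using paid_eq[of "bidder k"] bidder_range that unfolding pA \<alpha>_def bs_def by auto
    show "p j = 0" if "j \<in> Js" "(\<Sum>k\<in>S. augA a cuts j k) < augC c cuts j" for j
      using that by (auto simp: p_def augA_def augC_def cuts_def \<alpha>0_def)
  qed
  show ?thesis
    apply (rule exI[of _ cuts])
    using valid we paid_eq Sb unfolding Js_def by (auto simp: cuts_def intro!: exI[of _ p])
qed

end
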